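(* Consider the factorized (COM) cost model described in the context. There is no function $\rho$ that assigns a real number to every finite non-empty sequence of parameter triples $(m, fo, c)$ with the following property: for every instance and for all sequences $A, U, V, B$ of non-root nodes, with $U$ and $V$ non-empty, such that both concatenations $AUVB$ and $AVUB$ are valid join orders, $$\mathrm{Cost}(AUVB) \le \mathrm{Cost}(AVUB) \iff \rho(\mathrm{par}(U)) \le \rho(\mathrm{par}(V)).$$ Here $\mathrm{par}(W)$ denotes the sequence of triples $(m_i, fo_i, c_i)$ of the nodes $i$ of $W$, in order. In other words, this cost function does not satisfy the adjacent sequence interchange (ASI) property.
   Context: **Instance.** An instance consists of the following data. - A rooted tree $\mathcal{J}$ whose root $r$ is the driver relation and whose non-root nodes are join operators. - A number $N>0$, the driver cardinality. - For each non-root node $i$: a match probability $m_i\in[0,1]$, a fanout $fo_i\ge 1$ (a real number), and a per-probe cost $c_i>0$. By convention $m_r=1$. **Valid join orders.** A valid join order is a sequence listing every non-root node exactly once, such that each node whose parent is not $r$ appears after its parent. **Survival probability.** Let $T$ be a connected set of nodes with top node $v$ (that is, $T$ contains $v$ and, for each of its members other than $v$, also that member's parent). Define recursively $$m_T = m_v\Big(1-\big(1-\prod_{u} m_{T_u}\big)^{fo_v}\Big).$$ The product ranges over the children $u$ of $v$ that lie in $T$, and $T_u$ is the set of nodes of $T$ in the subtree rooted at $u$. An empty product equals $1$, so a single node $v$ has $m_{\{v\}} = m_v$. **Number of probes.** Suppose node $l$ is placed when the set of already placed nodes is $S$, where $S$ contains $r$ and all non-root nodes placed earlier. Let $r=a_0,a_1,\dots,a_k$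 be the proper ancestors of $l$, listed from the root down to the parent of $l$. For a node $u\in S$, let $T(u,S)$ be the set of nodes of $S$ in the subtree rooted at $u$. The expected number of probes into $l$ is $$\mathrm{probes}(l,S)=N\prod_{j=1}^{k} m_{a_j}fo_{a_j}\;\times\;\prod_{j=0}^{k}\;\prod_{u} m_{T(u,S)}.$$ Here the inner product ranges over the children $u$ of $a_j$ with $u\in S$ and $u\notin\{a_{j+1},l\}$. In particular, the first operator placed receives $N$ probes. **Cost of an order.** The cost of a valid order $\sigma$ is $\mathrm{Cost}(\sigma)=\sum_l c_l\,\mathrm{probes}(l,S_l)$, where $S_l$ is the set consisting of $r$ and the nodes preceding $l$ in $\sigma$. *)

theory Defs
  imports Complex_Main
begin

text \<open>Join trees. Nodes are natural numbers; V is the finite node set, r the root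
  (driver relation), par the parent function (par r is irrelevant).\<close>

definition is_tree :: "nat set \<Rightarrow> nat \<Rightarrow> (nat \<Rightarrow> nat) \<Rightarrow> bool" where
  "is_tree V r par \<longleftrightarrow> finite V \<and> r \<in> V \<and>
     (\<forall>v\<in>V. v \<noteq> r \<longrightarrow> par v \<in> V) \<and>
     (\<forall>v\<in>V. \<exists>k. (par ^^ k) v = r)"

definition is_instance ::
  "nat set \<Rightarrow> nat \<Rightarrow> (nat \<Rightarrow> nat) \<Rightarrow> real \<Rightarrow> (nat \<Rightarrow> real) \<Rightarrow> (nat \<Rightarrow> real) \<Rightarrow> (nat \<Rightarrow> real) \<Rightarrow> bool" where
  "is_instance V r par N m fo c \<longleftrightarrow> is_tree V r par \<and> N > 0 \<and> m r = 1 \<and>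
     (\<forall>i\<in>V. i \<noteq> r \<longrightarrow> 0 \<le> m i \<and> m i \<le> 1 \<and> 1 \<le> fo i \<and> 0 < c i)"

definition valid_order :: "nat set \<Rightarrow> nat \<Rightarrow> (nat \<Rightarrow> nat) \<Rightarrow> nat list \<Rightarrow> bool" where
  "valid_order V r par \<sigma> \<longleftrightarrow> distinct \<sigma> \<and> set \<sigma> = V - {r} \<and>
     (\<forall>i < length \<sigma>. par (\<sigma> ! i) \<noteq> r \<longrightarrow> par (\<sigma> ! i) \<in> set (take i \<sigma>))"

definition depth :: "nat \<Rightarrow> (nat \<Rightarrow> nat) \<Rightarrow> nat \<Rightarrow> nat" where
  "depth r par v = (LEAST k. (par ^^ k) v = r)"

text \<open>Proper ancestors a_0 = r, ..., a_k = parent of l.\<close>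

definition proper_ancestors :: "nat \<Rightarrow> (nat \<Rightarrow> nat) \<Rightarrow> nat \<Rightarrow> nat set" where
  "proper_ancestors r par l = {(par ^^ j) l | j. 0 < j \<and> j \<le> depth r par l}"

definition children_in :: "nat \<Rightarrow> (nat \<Rightarrow> nat) \<Rightarrow> nat set \<Rightarrow> nat \<Rightarrow> nat set" where
  "children_in r par T v = {u \<in> T. u \<noteq> r \<and> par u = v}"

text \<open>Survival probability m_T of the connected set T_v (nodes of T in the subtree of v),
  computed by the recursion of the paper with an explicit recursion-depth bound
  (fuel); with fuel at least the height of the subtree the value is exact, and
  additional fuel does not change it.\<close>

primrec msurv_fuel ::
  "nat \<Rightarrow> nat \<Rightarrow> (nat \<Rightarrow> nat) \<Rightarrow> (nat \<Rightarrow> real) \<Rightarrow> (nat \<Rightarrow> real) \<Rightarrow> nat set \<Rightarrow> nat \<Rightarrow> real" where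
  "msurv_fuel 0 r par m fo T v = m v"
| "msurv_fuel (Suc n) r par m fo T v =
     m v * (1 - (1 - (\<Prod>u\<in>children_in r par T v. msurv_fuel n r par m fo T u)) powr fo v)"

definition msurv ::
  "nat set \<Rightarrow> nat \<Rightarrow> (nat \<Rightarrow> nat) \<Rightarrow> (nat \<Rightarrow> real) \<Rightarrow> (nat \<Rightarrow> real) \<Rightarrow> nat set \<Rightarrow> nat \<Rightarrow> real" where
  "msurv V r par m fo T v = msurv_fuel (card V) r par m fo T v"

text \<open>Expected number of probes into l when the placed set (including r) is S.
  The inner product ranges over the children u of a_j in S other than
  a_{j+1} and l, i.e. over children of a_j in S that are not l and not ancestors of l.\<close>

definition probes ::
  "nat set \<Rightarrow> nat \<Rightarrow> (nat \<Rightarrow> nat) \<Rightarrow> real \<Rightarrow> (nat \<Rightarrow> real) \<Rightarrow> (nat \<Rightarrow> real) \<Rightarrow> nat \<Rightarrow> nat set \<Rightarrow> real" where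
  "probes V r par N m fo l S =
     N * (\<Prod>a\<in>proper_ancestors r par l - {r}. m a * fo a) *
     (\<Prod>a\<in>proper_ancestors r par l.
        \<Prod>u\<in>{u \<in> children_in r par S a. u \<notin> proper_ancestors r par l \<and> u \<noteq> l}.
          msurv V r par m fo S u)"

definition cost ::
  "nat set \<Rightarrow> nat \<Rightarrow> (nat \<Rightarrow> nat) \<Rightarrow> real \<Rightarrow> (nat \<Rightarrow> real) \<Rightarrow> (nat \<Rightarrow> real) \<Rightarrow> (nat \<Rightarrow> real) \<Rightarrow> nat list \<Rightarrow> real" where
  "cost V r par N m fo c \<sigma> =
     (\<Sum>i < length \<sigma>. c (\<sigma> ! i) * probes V r par N m fo (\<sigma> ! i) (insert r (set (take i \<sigma>))))"

definition params :: "(nat \<Rightarrow> real) \<Rightarrow> (nat \<Rightarrow> real) \<Rightarrow> (nat \<Rightarrow> real) \<Rightarrow> nat list \<Rightarrow> (real \<times> real \<times> real) list" where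
  "params m fo c W = map (\<lambda>i. (m i, fo i, c i)) W"

end

theory Submission
  imports Defs
begin

definition P0 :: "nat \<Rightarrow> nat" where "P0 x = (if x = 2 then 1 else 0)"
definition M0 :: "nat \<Rightarrow> real" where "M0 x = (if x = 2 \<or> x = 3 then 0 else 1)"
definition F0 :: "nat \<Rightarrow> real" where "F0 x = (if x = 1 then 2 else 1)"
definition C0 :: "nat \<Rightarrow> real" where "C0 x = 1"
abbreviation "V0 \<equiv> ({0,1,2,3} :: nat set)"

lemma S1: "{f j | j::nat. 0 < j \<and> j \<le> 1} = {f 1}"
proof -
  have "\<And>j::nat. (0 < j \<and> j \<le> 1) = (j = 1)" by auto
  then show ?thesis by auto
qed
lemma S2: "{f j | j::nat. 0 < j \<and> j \<le> 2} = {f 1, f 2}"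
proof -
  have "\<And>j::nat. (0 < j \<and> j \<le> 2) = (j = 1 \<or> j = 2)" by auto
  then show ?thesis by auto
qed

lemma d1: "depth 0 P0 1 = 1"
  unfolding depth_def
  apply (rule Least_equality)
   apply (simp add: P0_def)
  apply (case_tac y, simp_all add: P0_def)
  done
lemma d3: "depth 0 P0 3 = 1"
  unfolding depth_def
  apply (rule Least_equality)
   apply (simp add: P0_def)
  apply (case_tac y, simp_all add: P0_def)
  done
lemma d2: "depth 0 P0 2 = 2"
  unfolding depth_def
  apply (rule Least_equality)
   apply (simp add: P0_def numeral_2_eq_2)
  apply (case_tac y, simp add: P0_def)
  apply (case_tac nat, simp_all add: P0_def)
  done

lemma pa1: "proper_ancestors 0 P0 1 = {0}"
  unfolding proper_ancestors_def d1 S1 by (simp add: P0_def)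
lemma pa3: "proper_ancestors 0 P0 3 = {0}"
  unfolding proper_ancestors_def d3 S1 by (simp add: P0_def)
lemma pa2: "proper_ancestors 0 P0 2 = {0,1}"
  unfolding proper_ancestors_def d2 S2 by (auto simp: P0_def numeral_2_eq_2)

lemma ch: "children_in 0 P0 T v = {u \<in> T. u \<noteq> 0 \<and> P0 u = v}"
  by (simp add: children_in_def)

lemma ms_leaf0: "msurv_fuel n 0 P0 M0 F0 T 2 = 0" "msurv_fuel n 0 P0 M0 F0 T 3 = 0"
  by (cases n; simp add: M0_def)+

lemma ms_a: "msurv V0 0 P0 M0 F0 {0,1,2} 1 = 0"
proof -
  have "children_in 0 P0 {0,1,2} 1 = {2}" by (auto simp: children_in_def P0_def)
  then show ?thesis by (simp add: msurv_def numeral_eq_Suc ms_leaf0 M0_def F0_def del: One_nat_def)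
qed

lemma ms_b: "msurv V0 0 P0 M0 F0 {0,1} 1 = 1"
proof -
  have "children_in 0 P0 {0,1} 1 = {}" by (auto simp: children_in_def P0_def)
  then show ?thesis by (simp add: msurv_def numeral_eq_Suc M0_def F0_def del: One_nat_def)
qed

lemma ms_c: "msurv V0 0 P0 M0 F0 S 3 = 0"
  by (simp add: msurv_def ms_leaf0)

lemma cost_123: "cost V0 0 P0 1 M0 F0 C0 [1,2,3] = 3"
proof -
  have p1: "probes V0 0 P0 1 M0 F0 1 {0} = 1"
  proof -
    have e: "children_in 0 P0 {0} a = {}" for a
      by (auto simp: children_in_def)
    show ?thesis unfolding probes_def pa1 e by simp
  qed
  have ch2: "{u \<in> children_in 0 P0 {0,1} a. u \<notin> {0,1} \<and> u \<noteq> 2} = {}" for a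
    by (auto simp: children_in_def)
  have p2: "probes V0 0 P0 1 M0 F0 2 {0,1} = 2"
    unfolding probes_def pa2 ch2 by (simp add: M0_def F0_def)
  have ch3: "children_in 0 P0 {0,1,2} a = (if a = 0 then {1} else if a = 1 then {2} else {})" for a
    by (auto simp: children_in_def P0_def)
  have p3: "probes V0 0 P0 1 M0 F0 3 {0,1,2} = 0"
    proof -
    have h: "{u. u = Suc 0 \<and> 0 < u \<and> u \<noteq> 3} = {Suc 0}" by auto
    show ?thesis unfolding probes_def pa3 ch3 using ms_a by (simp add: h)
  qed
  show ?thesis unfolding cost_def using p1 p2 p3
    by (simp add: lessThan_nat_numeral insert_commute C0_def)
qed

lemma cost_132: "cost V0 0 P0 1 M0 F0 C0 [1,3,2] = 2"
proof -
  have p1: "probes V0 0 P0 1 M0 F0 1 {0} = 1"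
  proof -
    have e: "children_in 0 P0 {0} a = {}" for a
      by (auto simp: children_in_def)
    show ?thesis unfolding probes_def pa1 e by simp
  qed
  have chA: "children_in 0 P0 {0,1} a = (if a = 0 then {1} else {})" for a
    by (auto simp: children_in_def P0_def)
  have p3: "probes V0 0 P0 1 M0 F0 3 {0,1} = 1"
  proof -
    have h: "{u. u = Suc 0 \<and> 0 < u \<and> u \<noteq> 3} = {Suc 0}" by auto
    show ?thesis unfolding probes_def pa3 chA using ms_b by (simp add: h)
  qed
  have chB: "children_in 0 P0 {0,1,3} a = (if a = 0 then {1,3} else {})" for a
    by (auto simp: children_in_def P0_def)
  have p2: "probes V0 0 P0 1 M0 F0 2 {0,1,3} = 0"
  proof -
    have h: "{u. (u = Suc 0 \<or> u = 3) \<and> u \<noteq> 0 \<and> u \<noteq> Suc 0 \<and> u \<noteq> 2} = {3}" by auto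
    show ?thesis unfolding probes_def pa2 chB using ms_c[of "{0,1,3}"] by (simp add: h) (intro disjI2 exI[of _ 3], simp)
  qed
  show ?thesis unfolding cost_def using p1 p2 p3
    by (simp add: lessThan_nat_numeral insert_commute C0_def)
qed

lemma inst: "is_instance V0 0 P0 1 M0 F0 C0"
  unfolding is_instance_def is_tree_def
proof (intro conjI)
  show "\<forall>v\<in>V0. \<exists>k. (P0 ^^ k) v = 0"
  proof
    fix v assume "v \<in> V0"
    then show "\<exists>k. (P0 ^^ k) v = 0"
    proof (elim insertE)
      assume "v = 2" then show ?thesis by (intro exI[of _ 2]) (simp add: P0_def numeral_2_eq_2)
    qed (auto intro!: exI[of _ 1] simp: P0_def)
  qed
qed (auto simp: P0_def M0_def F0_def C0_def)

lemma vo1: "valid_order V0 0 P0 [1,2,3]"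
  unfolding valid_order_def by (auto simp: P0_def less_Suc_eq numeral_eq_Suc)
lemma vo2: "valid_order V0 0 P0 [1,3,2]"
  unfolding valid_order_def by (auto simp: P0_def less_Suc_eq numeral_eq_Suc)

theorem theorem3p1:
  shows "\<not> (\<exists>\<rho> :: (real \<times> real \<times> real) list \<Rightarrow> real.
     \<forall>V r par N m fo c A U W B.
       is_instance V r par N m fo c \<longrightarrow> U \<noteq> [] \<longrightarrow> W \<noteq> [] \<longrightarrow>
       valid_order V r par (A @ U @ W @ B) \<longrightarrow> valid_order V r par (A @ W @ U @ B) \<longrightarrow>
       (cost V r par N m fo c (A @ U @ W @ B) \<le> cost V r par N m fo c (A @ W @ U @ B)
        \<longleftrightarrow> \<rho> (params m fo c U) \<le> \<rho> (params m fo c W)))"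
proof
  assume "\<exists>\<rho> :: (real \<times> real \<times> real) list \<Rightarrow> real.
     \<forall>V r par N m fo c A U W B.
       is_instance V r par N m fo c \<longrightarrow> U \<noteq> [] \<longrightarrow> W \<noteq> [] \<longrightarrow>
       valid_order V r par (A @ U @ W @ B) \<longrightarrow> valid_order V r par (A @ W @ U @ B) \<longrightarrow>
       (cost V r par N m fo c (A @ U @ W @ B) \<le> cost V r par N m fo c (A @ W @ U @ B)
        \<longleftrightarrow> \<rho> (params m fo c U) \<le> \<rho> (params m fo c W))"
  then obtain \<rho> :: "(real \<times> real \<times> real) list \<Rightarrow> real" where H: "\<forall>V r par N m fo c A U W B.
       is_instance V r par N m fo c \<longrightarrow> U \<noteq> [] \<longrightarrow> W \<noteq> [] \<longrightarrow>
       valid_order V r par (A @ U @ W @ B) \<longrightarrow> valid_order V r par (A @ W @ U @ B) \<longrightarrow>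
       (cost V r par N m fo c (A @ U @ W @ B) \<le> cost V r par N m fo c (A @ W @ U @ B)
        \<longleftrightarrow> \<rho> (params m fo c U) \<le> \<rho> (params m fo c W))" by blast
  have pe: "params M0 F0 C0 [3] = params M0 F0 C0 [2]"
    by (simp add: params_def M0_def F0_def C0_def)
  have "cost V0 0 P0 1 M0 F0 C0 ([1] @ [3] @ [2] @ []) \<le> cost V0 0 P0 1 M0 F0 C0 ([1] @ [2] @ [3] @ [])
        \<longleftrightarrow> \<rho> (params M0 F0 C0 [3]) \<le> \<rho> (params M0 F0 C0 [2])"
    using H inst vo1 vo2 by (metis append.simps list.distinct(1))
  then have "cost V0 0 P0 1 M0 F0 C0 [1,3,2] \<le> cost V0 0 P0 1 M0 F0 C0 [1,2,3]"
    using pe by simp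
  moreover have "cost V0 0 P0 1 M0 F0 C0 ([1] @ [2] @ [3] @ []) \<le> cost V0 0 P0 1 M0 F0 C0 ([1] @ [3] @ [2] @ [])
        \<longleftrightarrow> \<rho> (params M0 F0 C0 [2]) \<le> \<rho> (params M0 F0 C0 [3])"
    using H inst vo1 vo2 by (metis append.simps list.distinct(1))
  then have "cost V0 0 P0 1 M0 F0 C0 [1,2,3] \<le> cost V0 0 P0 1 M0 F0 C0 [1,3,2]"
    using pe by simp
  ultimately show False using cost_123 cost_132 by simp
qed

end
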